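(* Let $p$ be a prime, $d\ge1$, and $\boldsymbol n\in\mathbb{Z}^d$. Let $(a_k)_{k\in\mathbb{Z}}$ be elements of $\mathbb{Z}_p$ such that for all integers $l$ and $s\ge0$, $$\sum_{k:\ \lfloor k/p^s\rfloor=l}a_k\equiv0\pmod{p^s}.$$ Let $C:\mathbb{Z}^d\times\mathbb{Z}\to\mathbb{Z}_p$ be such that for all $k\in\mathbb{Z}$ and integers $r\ge1$, $$C(p^r\boldsymbol n;k)\equiv C(p^{r-1}\boldsymbol n;\lfloor k/p\rfloor)\pmod{p^r}.$$ Then for all integers $l$ and $r\ge0$, $$\sum_{k:\ \lfloor k/p^r\rfloor=l}a_k\,C(p^r\boldsymbol n;k)\equiv0\pmod{p^r}.$$
   Context: $\mathbb{Z}_p$ denotes the $p$-adic integers and $\lfloor x\rfloor$ the floor function; each sum over $\{k:\lfloor k/p^s\rfloor=l\}$ is a finite sum over the $p^s$ integers $k=lp^s,\dots,lp^s+p^s-1$. *)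

theory Defs
  imports "HOL-Computational_Algebra.Primes"
begin

text \<open>The p-adic integers Z_p, modelled as the inverse limit of Z/p^n Z:
  an element is a coherent sequence x of canonical residues, x n in {0..<p^n},
  with x n = x (n+1) mod p^n.\<close>

definition padic_int :: "nat \<Rightarrow> (nat \<Rightarrow> int) \<Rightarrow> bool" where
  "padic_int p x \<longleftrightarrow> (\<forall>n. 0 \<le> x n \<and> x n < int p ^ n \<and> x n = x (Suc n) mod int p ^ n)"

definition padd :: "nat \<Rightarrow> (nat \<Rightarrow> int) \<Rightarrow> (nat \<Rightarrow> int) \<Rightarrow> (nat \<Rightarrow> int)" where
  "padd p x y = (\<lambda>n. (x n + y n) mod int p ^ n)"

definition pmul :: "nat \<Rightarrow> (nat \<Rightarrow> int) \<Rightarrow> (nat \<Rightarrow> int) \<Rightarrow> (nat \<Rightarrow> int)" where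
  "pmul p x y = (\<lambda>n. (x n * y n) mod int p ^ n)"

definition psum :: "nat \<Rightarrow> ('a \<Rightarrow> nat \<Rightarrow> int) \<Rightarrow> 'a set \<Rightarrow> (nat \<Rightarrow> int)" where
  "psum p f A = (\<lambda>n. (\<Sum>k\<in>A. f k n) mod int p ^ n)"

text \<open>Congruence modulo p^s in Z_p: x - y lies in p^s Z_p, i.e. x and y have the
  same image in Z_p / p^s Z_p = Z/p^s Z.\<close>
definition pcong :: "nat \<Rightarrow> nat \<Rightarrow> (nat \<Rightarrow> int) \<Rightarrow> (nat \<Rightarrow> int) \<Rightarrow> bool" where
  "pcong p s x y \<longleftrightarrow> x s mod int p ^ s = y s mod int p ^ s"

definition pzero :: "nat \<Rightarrow> int" where "pzero = (\<lambda>n. 0)"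

end

theory Submission
  imports Defs
begin


lemma blk: "(q::int) > 0 \<Longrightarrow> {k::int. k div q = l} = {l*q..<l*q+q}"
proof (intro set_eqI iffI)
  fix k assume q: "q > 0"
  { assume "k \<in> {k. k div q = l}"
    then have "k div q = l" by simp
    moreover have "k = q * (k div q) + k mod q" by simp
    moreover have "0 \<le> k mod q" "k mod q < q" using q by auto
    ultimately show "k \<in> {l*q..<l*q+q}" by (auto simp: algebra_simps) }
  { assume "k \<in> {l*q..<l*q+q}"
    then have r: "0 \<le> k - l*q" "k - l*q < q" by auto
    have "k div q = ((k - l*q) + l*q) div q" by simp
    also have "\<dots> = (k - l*q) div q + l" using q by (simp only: div_mult_self3 div_mult_self1) 
    also have "(k - l*q) div q = 0" using r by (simp add: div_pos_pos_trivial)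
    finally show "k \<in> {k. k div q = l}" by simp }
qed


lemma blk_fin: "(q::int) > 0 \<Longrightarrow> finite {k::int. k div q = l}"
  using blk by simp

lemma regroup:
  assumes "(P::int) > 0" "q > 0"
  shows "(\<Sum>k\<in>{k. k div (P*q) = l}. f k) = (\<Sum>m\<in>{m. m div q = l}. \<Sum>k\<in>{k. k div P = m}. f k)"
proof -
  have eq: "{k. k div (P*q) = l} = (\<Union>m\<in>{m. m div q = l}. {k. k div P = m})"
    using assms by (auto simp: zdiv_zmult2_eq)
  show ?thesis unfolding eq
    apply (rule sum.UNION_disjoint)
    using assms blk_fin by auto
qed

lemma main:
  fixes P :: int and r :: nat
  assumes P: "P > 0"
  shows "\<And>a C l. (\<And>l s. s \<le> r \<Longrightarrow> P^s dvd (\<Sum>k\<in>{k. k div P^s = l}. a k)) \<Longrightarrow>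
     (\<And>j k. 1 \<le> j \<Longrightarrow> j \<le> r \<Longrightarrow> P^j dvd C j k - C (j-1) (k div P)) \<Longrightarrow>
     P^r dvd (\<Sum>k\<in>{k. k div P^r = l}. a k * C r k)"
proof (induction r)
  case 0
  then show ?case by simp
next
  case (Suc r)
  note ha = Suc.prems(1) and hC = Suc.prems(2)
  define A where "A m = (\<Sum>k\<in>{k. k div P = m}. a k)" for m
  have PA: "P dvd A m" for m using ha[of 1 m] by (simp add: A_def)
  define b where "b m = A m div P" for m
  have Ab: "A m = P * b m" for m using PA by (simp add: b_def)
  have fin: "finite {k. k div P^Suc r = l}" using P by (intro blk_fin) simp
  have d1: "P^Suc r dvd (\<Sum>k\<in>{k. k div P^Suc r = l}. a k * C (Suc r) k)
              - (\<Sum>k\<in>{k. k div P^Suc r = l}. a k * C r (k div P))"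
    unfolding sum_subtractf[symmetric]
    apply (rule dvd_sum)
    using hC[of "Suc r"] by (simp add: right_diff_distrib[symmetric])
  have "(\<Sum>k\<in>{k. k div P^Suc r = l}. a k * C r (k div P))
      = (\<Sum>m\<in>{m. m div P^r = l}. \<Sum>k\<in>{k. k div P = m}. a k * C r (k div P))"
    using regroup[of P "P^r" "\<lambda>k. a k * C r (k div P)" l] P by simp
  also have "\<dots> = (\<Sum>m\<in>{m. m div P^r = l}. C r m * A m)"
    unfolding A_def sum_distrib_left by (intro sum.cong refl) (auto simp: mult.commute)
  also have "\<dots> = P * (\<Sum>m\<in>{m. m div P^r = l}. b m * C r m)"
    unfolding Ab sum_distrib_left by (simp add: algebra_simps)
  finally have eq: "(\<Sum>k\<in>{k. k div P^Suc r = l}. a k * C r (k div P)) = P * (\<Sum>m\<in>{m. m div P^r = l}. b m * C r m)" .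
  have hb: "P^s dvd (\<Sum>k\<in>{k. k div P^s = l'}. b k)" if "s \<le> r" for l' s
  proof -
    have "P * (\<Sum>k\<in>{k. k div P^s = l'}. b k) = (\<Sum>k\<in>{k. k div P^s = l'}. A k)"
      unfolding Ab sum_distrib_left by simp
    also have "\<dots> = (\<Sum>k\<in>{k. k div (P*P^s) = l'}. a k)"
      unfolding A_def using regroup[of P "P^s" a l'] P by simp
    finally have "P * P^s dvd P * (\<Sum>k\<in>{k. k div P^s = l'}. b k)"
      using ha[of "Suc s" l'] that by simp
    then show ?thesis using P by simp
  qed
  have "P^r dvd (\<Sum>m\<in>{m. m div P^r = l}. b m * C r m)"
    by (rule Suc.IH) (use hb hC in auto)
  then have "P^Suc r dvd (\<Sum>k\<in>{k. k div P^Suc r = l}. a k * C r (k div P))"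
    unfolding eq by simp
  from dvd_add[OF d1 this] show ?case by simp
qed


lemma padic_mod:
  assumes "padic_int p x"
  shows "x (s + d) mod int p ^ s = x s"
proof (induction d)
  case 0
  have "0 \<le> x s" "x s < int p ^ s" using assms unfolding padic_int_def by blast+
  then show ?case by simp
next
  case (Suc d)
  have dv: "int p ^ s dvd int p ^ (s + d)" by (rule le_imp_power_dvd) simp
  have e: "x (s + d) = x (Suc (s + d)) mod int p ^ (s + d)"
    using assms unfolding padic_int_def by blast
  have "x (s + Suc d) mod int p ^ s = (x (Suc (s + d)) mod int p ^ (s + d)) mod int p ^ s"
    using mod_mod_cancel[OF dv, of "x (Suc (s + d))"] by simp
  also have "\<dots> = x (s + d) mod int p ^ s" using e by simp
  finally show ?case using Suc.IH by simp
qed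

lemma padic_mod':
  assumes "padic_int p x" "s \<le> r"
  shows "x r mod int p ^ s = x s"
  using padic_mod[OF assms(1), of s "r - s"] assms(2) by simp

theorem lemma5p6:
  fixes p :: nat and n :: "'d::finite \<Rightarrow> int"
    and a :: "int \<Rightarrow> nat \<Rightarrow> int"
    and C :: "('d \<Rightarrow> int) \<Rightarrow> int \<Rightarrow> nat \<Rightarrow> int"
  assumes "prime p"
    and "\<And>k. padic_int p (a k)"
    and "\<And>m k. padic_int p (C m k)"
    and "\<And>l s. pcong p s (psum p a {k. k div int p ^ s = l}) pzero"
    and "\<And>k r. r \<ge> 1 \<Longrightarrow>
           pcong p r (C (\<lambda>i. int p ^ r * n i) k) (C (\<lambda>i. int p ^ (r - 1) * n i) (k div int p))"
  shows "\<And>l r. pcong p r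
           (psum p (\<lambda>k. pmul p (a k) (C (\<lambda>i. int p ^ r * n i) k)) {k. k div int p ^ r = l}) pzero"
proof -
  fix l r
  have p0: "int p > 0" using assms(1) prime_gt_0_nat by auto
  let ?C = "\<lambda>j k. C (\<lambda>i. int p ^ j * n i) k r"
  have hA: "int p^s dvd (\<Sum>k\<in>{k. k div int p^s = l'}. a k r)" if "s \<le> r" for l' s
  proof -
    have "(\<Sum>k\<in>{k. k div int p^s = l'}. a k r) mod int p^s
        = (\<Sum>k\<in>{k. k div int p^s = l'}. a k r mod int p^s) mod int p^s"
      by (simp add: mod_sum_eq)
    also have "\<dots> = (\<Sum>k\<in>{k. k div int p^s = l'}. a k s) mod int p^s"
      using padic_mod'[OF assms(2) that] by simp
    also have "\<dots> = 0" using assms(4)[of s l'] unfolding pcong_def psum_def pzero_def by simp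
    finally show ?thesis by auto
  qed
  have hC: "int p^j dvd ?C j k - ?C (j-1) (k div int p)" if "1 \<le> j" "j \<le> r" for j k
  proof -
    have "?C j k mod int p^j = C (\<lambda>i. int p ^ j * n i) k j"
      using padic_mod'[OF assms(3) that(2)] by simp
    also have "\<dots> mod int p^j = C (\<lambda>i. int p ^ (j-1) * n i) (k div int p) j mod int p^j"
      using assms(5)[OF that(1), of k] unfolding pcong_def by simp
    also have "\<dots> = ?C (j-1) (k div int p) mod int p^j"
      using padic_mod'[OF assms(3) that(2)] padic_mod[OF assms(3), where d=0 and s=j] by simp
    finally have "?C j k mod int p^j mod int p^j = ?C (j-1) (k div int p) mod int p^j" .
    then show ?thesis by (simp add: mod_eq_dvd_iff)
  qed
  have "int p^r dvd (\<Sum>k\<in>{k. k div int p^r = l}. a k r * ?C r k)"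
    apply (rule main[OF p0, of r "\<lambda>k. a k r" "\<lambda>j k. C (\<lambda>i. int p ^ j * n i) k r" l])
     apply (erule hA)
    apply (erule (1) hC)
    done
  then have "(\<Sum>k\<in>{k. k div int p^r = l}. a k r * ?C r k) mod int p^r = 0" by simp
  then show "pcong p r
           (psum p (\<lambda>k. pmul p (a k) (C (\<lambda>i. int p ^ r * n i) k)) {k. k div int p ^ r = l}) pzero"
  proof -
    have "(\<Sum>k\<in>{k. k div int p^r = l}. (a k r * ?C r k) mod int p ^ r) mod int p ^ r = 0"
      using \<open>(\<Sum>k\<in>{k. k div int p^r = l}. a k r * ?C r k) mod int p^r = 0\<close>
      by (simp only: mod_sum_eq)
    then show ?thesis unfolding pcong_def psum_def pmul_def pzero_def by simp
  qed
qed

end
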